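(* Let $n\ge 1$ be an integer, $N=2^n$, and let $t\in[0,N)$ be a non-integer real number. Then $$\frac{1}{N}\sum_{k=0}^{N-1} p_{N,t}(k)\,\cot\!\Big((t-k)\frac{\pi}{N}\Big)=\cot(t\pi).$$
   Context: For a positive integer $N$, a non-integer real $t$ and an integer $k$, define $c_{N,t}(k)=\dfrac{1}{N}\dfrac{\sin((t-k)\pi)}{\sin\!\big((t-k)\frac{\pi}{N}\big)}$ and $p_{N,t}(k)=c_{N,t}(k)^2=\dfrac{1}{N^2}\dfrac{\sin^2((t-k)\pi)}{\sin^2\!\big((t-k)\frac{\pi}{N}\big)}$. (For $0\le k<N$ and $t\in(0,N)$ non-integer, the denominators are nonzero.) *)

theory Defs
  imports Complex_Main
begin

definition c_coef :: "nat \<Rightarrow> real \<Rightarrow> int \<Rightarrow> real" where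
  "c_coef N t k = (1 / real N) * (sin ((t - real_of_int k) * pi) / sin ((t - real_of_int k) * (pi / real N)))"

definition p_coef :: "nat \<Rightarrow> real \<Rightarrow> int \<Rightarrow> real" where
  "p_coef N t k = (c_coef N t k)\<^sup>2"

end

theory Submission
  imports Defs
begin

definition gg :: "real \<Rightarrow> real" where "gg a = cos a / sin a ^ 3"

lemma gg_double: "gg a + gg (a - pi/2) = 8 * gg (2*a)"
proof -
  have sc: "sin a ^ 2 + cos a ^ 2 = 1" by simp
  have s: "sin (a - pi/2) = - cos a" by (simp add: sin_diff)
  have c: "cos (a - pi/2) = sin a" by (simp add: cos_diff)
  show ?thesis
  proof (cases "sin a = 0 \<or> cos a = 0")
    case True
    then show ?thesis unfolding gg_def s c by (auto simp: sin_double)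
  next
    case False
    then have "cos a / sin a ^ 3 - sin a / cos a ^ 3 = (cos a ^ 4 - sin a ^ 4) / (sin a ^ 3 * cos a ^ 3)"
      by (simp add: field_simps eval_nat_numeral)
    also have "cos a ^ 4 - sin a ^ 4 = (cos a ^ 2 - sin a ^ 2) * (sin a ^ 2 + cos a ^ 2)"
      by algebra
    also have "\<dots> = cos (2*a)" using sc by (simp add: cos_double)
    also have "sin a ^ 3 * cos a ^ 3 = sin (2*a) ^ 3 / 8" by (simp add: sin_double power_mult_distrib)
    finally show ?thesis unfolding gg_def s c by simp
  qed
qed

lemma gg_sum: "\<And>y. (\<Sum>k = 0..<(2::nat)^n. gg (y - real k * pi / 2^n)) = 8^n * gg (2^n * y)"
proof (induction n)
  case 0
  then show ?case by simp
next
  case (Suc n)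
  fix y
  define M :: nat where "M = 2^n"
  have M2: "(2::nat)^Suc n = M + M" by (simp add: M_def)
  have Mr: "(2::real)^Suc n = 2 * real M" by (simp add: M_def)
  have Mp: "real M > 0" by (simp add: M_def)
  let ?f = "\<lambda>k::nat. gg (y - real k * pi / 2^Suc n)"
  have "(\<Sum>k = 0..<(2::nat)^Suc n. ?f k) = (\<Sum>k = 0..<M. ?f k) + (\<Sum>k = M..<M+M. ?f k)"
    unfolding M2 by (rule sum.atLeastLessThan_concat[symmetric]) auto
  also have "(\<Sum>k = M..<M+M. ?f k) = (\<Sum>k = 0..<M. ?f (k + M))"
    using sum.shift_bounds_nat_ivl[of ?f 0 M M] by simp
  also have "(\<Sum>k = 0..<M. ?f k) + (\<Sum>k = 0..<M. ?f (k + M)) = (\<Sum>k = 0..<M. 8 * gg ((2*y) - real k * pi / 2^n))"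
    unfolding sum.distrib[symmetric]
  proof (rule sum.cong)
    fix k assume "k \<in> {0..<M}"
    have e1: "y - real (k + M) * pi / 2 ^ Suc n = (y - real k * pi / 2 ^ Suc n) - pi/2"
      using Mp unfolding Mr by (simp add: field_simps)
    have e2: "2 * (y - real k * pi / 2 ^ Suc n) = 2*y - real k * pi / 2^n"
      by (simp add: field_simps)
    show "?f k + ?f (k + M) = 8 * gg ((2*y) - real k * pi / 2^n)"
      unfolding e1 gg_double e2 ..
  qed simp
  also have "\<dots> = 8 * 8^n * gg (2^n * (2*y))"
    using Suc.IH[of "2*y"] by (simp add: sum_distrib_left[symmetric] M_def)
  finally show "(\<Sum>k = 0..<(2::nat)^Suc n. ?f k) = 8^Suc n * gg (2^Suc n * y)"
    by (simp add: mult.assoc mult.left_commute)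
qed

theorem mainTheorem1:
  fixes n :: nat and t :: real
  assumes "n \<ge> 1"
    and "0 \<le> t" and "t < real (2 ^ n)"
    and "t \<notin> \<int>"
  shows "(1 / real (2 ^ n)) * (\<Sum>k = 0..<(2 ^ n :: nat).
            p_coef (2 ^ n) t (int k) * cot ((t - real k) * (pi / real (2 ^ n))))
         = cot (t * pi)"
proof -
  define N :: real where "N = 2^n"
  have Np: "N > 0" by (simp add: N_def)
  have st: "sin (t*pi) \<noteq> 0" using assms(4) sin_times_pi_eq_0 by blast
  have ssq: "sin ((t - real k) * pi) ^ 2 = sin (t*pi) ^ 2" for k :: nat
  proof -
    have m: "((-1::real)^k)^2 = 1" by (simp add: power_even_eq[symmetric] flip: power_mult)
    show ?thesis by (simp add: left_diff_distrib sin_diff cos_npi power_mult_distrib m)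
  qed
  have tm: "p_coef (2 ^ n) t (int k) * cot ((t - real k) * (pi / real (2 ^ n)))
     = sin (t*pi) ^ 2 / N^2 * gg (t*pi/N - real k * pi / 2^n)" for k :: nat
  proof -
    have a: "(t - real k) * (pi / real ((2::nat) ^ n)) = t*pi/N - real k * pi / 2^n"
      by (simp add: N_def field_simps)
    show ?thesis
      unfolding p_coef_def c_coef_def a using ssq[of k]
      by (simp add: gg_def cot_def N_def power_divide field_simps power2_eq_square power3_eq_cube)
  qed
  have "(1 / real (2 ^ n)) * (\<Sum>k = 0..<(2 ^ n :: nat).
            p_coef (2 ^ n) t (int k) * cot ((t - real k) * (pi / real (2 ^ n))))
     = (1/N) * (sin (t*pi) ^ 2 / N^2 * (\<Sum>k = 0..<(2 ^ n :: nat). gg (t*pi/N - real k * pi / 2^n)))"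
    unfolding tm by (simp add: sum_distrib_left N_def)
  also have "\<dots> = (1/N) * (sin (t*pi) ^ 2 / N^2 * (8^n * gg (t*pi)))"
    unfolding gg_sum using Np by (simp add: N_def)
  also have "(8::real)^n = N^3" 
  proof -
    have "(8::real)^n = (2^3)^n" by simp
    also have "\<dots> = (2^n)^3" by (metis power_mult mult.commute)
    finally show ?thesis by (simp add: N_def)
  qed
  also have "(1/N) * (sin (t*pi) ^ 2 / N^2 * (N^3 * gg (t*pi))) = cot (t*pi)"
    using Np st by (simp add: gg_def cot_def field_simps power2_eq_square power3_eq_cube)
  finally show ?thesis .
qed

end
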